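(* Let $\mathcal{H}$ be a complex separable Hilbert space and $\mathcal{E}(\mathcal{H})$ its set of effects. The function $\mathcal{S}_1:\mathcal{E}(\mathcal{H})\to\mathbb{R}$, $$\mathcal{S}_1(A):=\bigl(\|A\|+\|I-A\|-1\bigr)-\bigl(\|A(I-A)\|+\|I-A(I-A)\|-1\bigr),$$ satisfies the requirements (S1)–(S6), i.e. it is a sharpness measure.
   Context: An effect is a selfadjoint bounded operator $A$ on $\mathcal{H}$ with $\mathbb{O}\le A\le I$; $A':=I-A$. An effect is trivial if $A=\lambda I$, $\lambda\in[0,1]$; a nontrivial projection is a projection other than $\mathbb{O},I$. Norms are operator norms. Requirements for $\mathcal{S}:\mathcal{E}(\mathcal{H})\to\mathbb{R}$: (S1) $0\le\mathcal{S}(A)\le1$; (S2) $\mathcal{S}(A)=0$ iff $A$ is trivial; (S3) $\mathcal{S}(A)=1$ iff $A$ is a nontrivial projection; (S4) $\mathcal{S}(A')=\mathcal{S}(A)$; (S5) $\mathcal{S}(CAC^{-1})=\mathcal{S}(A)$ for every invertible bounded $C$ such that $CAC^{-1}$ is an effect; (S6) $A\mapsto\mathcal{S}(A)$ is operator-norm continuous. *)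

theory Defs
  imports "HOL-Analysis.Analysis"
begin

class complex_vector = real_vector +
  fixes cscale :: "complex \<Rightarrow> 'a \<Rightarrow> 'a"
  assumes cscale_add_right: "cscale a (x + y) = cscale a x + cscale a y"
    and cscale_add_left: "cscale (a + b) x = cscale a x + cscale b x"
    and cscale_cscale: "cscale a (cscale b x) = cscale (a * b) x"
    and cscale_one: "cscale 1 x = x"
    and scaleR_cscale: "scaleR r x = cscale (complex_of_real r) x"

class complex_inner = complex_vector + real_normed_vector +
  fixes cinner :: "'a \<Rightarrow> 'a \<Rightarrow> complex"
  assumes cinner_commute: "cinner x y = cnj (cinner y x)"
    and cinner_add_left: "cinner (x + y) z = cinner x z + cinner y z"
    and cinner_cscale_left: "cinner (cscale r x) y = cnj r * cinner x y"
    and cinner_real_nonneg: "Im (cinner x x) = 0 \<and> Re (cinner x x) \<ge> 0"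
    and cinner_eq_zero_iff: "cinner x x = 0 \<longleftrightarrow> x = 0"
    and norm_eq_sqrt_cinner: "norm x = sqrt (Re (cinner x x))"

class chilbert_space = complex_inner + complete_space

definition separable_hilbert :: "'a::chilbert_space itself \<Rightarrow> bool" where
  "separable_hilbert _ \<longleftrightarrow> separable_space (euclidean :: 'a topology)"

text \<open>Bounded (complex-)linear operators on H are the bounded (real-)linear
  maps that commute with complex scalar multiplication. The norm of
  blinfun is the operator norm.\<close>
definition bounded_op :: "('a::chilbert_space \<Rightarrow>\<^sub>L 'a) \<Rightarrow> bool" where
  "bounded_op A \<longleftrightarrow> (\<forall>c x. blinfun_apply A (cscale c x) = cscale c (blinfun_apply A x))"

definition selfadjoint :: "('a::chilbert_space \<Rightarrow>\<^sub>L 'a) \<Rightarrow> bool" where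
  "selfadjoint A \<longleftrightarrow> bounded_op A \<and>
     (\<forall>x y. cinner (blinfun_apply A x) y = cinner x (blinfun_apply A y))"

definition op_le :: "('a::chilbert_space \<Rightarrow>\<^sub>L 'a) \<Rightarrow> ('a \<Rightarrow>\<^sub>L 'a) \<Rightarrow> bool" where
  "op_le A B \<longleftrightarrow> (\<forall>x. Re (cinner x (blinfun_apply A x)) \<le> Re (cinner x (blinfun_apply B x)))"

definition effects :: "('a::chilbert_space \<Rightarrow>\<^sub>L 'a) set" where
  "effects = {A. selfadjoint A \<and> op_le 0 A \<and> op_le A id_blinfun}"

definition trivial_effect :: "('a::chilbert_space \<Rightarrow>\<^sub>L 'a) \<Rightarrow> bool" where
  "trivial_effect A \<longleftrightarrow> (\<exists>l::real. 0 \<le> l \<and> l \<le> 1 \<and> A = l *\<^sub>R id_blinfun)"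

definition projection :: "('a::chilbert_space \<Rightarrow>\<^sub>L 'a) \<Rightarrow> bool" where
  "projection P \<longleftrightarrow> selfadjoint P \<and> P o\<^sub>L P = P"

definition nontrivial_projection :: "('a::chilbert_space \<Rightarrow>\<^sub>L 'a) \<Rightarrow> bool" where
  "nontrivial_projection P \<longleftrightarrow> projection P \<and> P \<noteq> 0 \<and> P \<noteq> id_blinfun"

definition invertible_op :: "('a::chilbert_space \<Rightarrow>\<^sub>L 'a) \<Rightarrow> bool" where
  "invertible_op C \<longleftrightarrow> bounded_op C \<and>
     (\<exists>D. bounded_op D \<and> C o\<^sub>L D = id_blinfun \<and> D o\<^sub>L C = id_blinfun)"

definition op_inverse :: "('a::chilbert_space \<Rightarrow>\<^sub>L 'a) \<Rightarrow> ('a \<Rightarrow>\<^sub>L 'a)" where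
  "op_inverse C = (THE D. bounded_op D \<and> C o\<^sub>L D = id_blinfun \<and> D o\<^sub>L C = id_blinfun)"

definition sharpness_measure :: "(('a::chilbert_space \<Rightarrow>\<^sub>L 'a) \<Rightarrow> real) \<Rightarrow> bool" where
  "sharpness_measure S \<longleftrightarrow>
     (\<forall>A\<in>effects. 0 \<le> S A \<and> S A \<le> 1) \<and>
     (\<forall>A\<in>effects. S A = 0 \<longleftrightarrow> trivial_effect A) \<and>
     (\<forall>A\<in>effects. S A = 1 \<longleftrightarrow> nontrivial_projection A) \<and>
     (\<forall>A\<in>effects. S (id_blinfun - A) = S A) \<and>
     (\<forall>A\<in>effects. \<forall>C. invertible_op C \<and> C o\<^sub>L A o\<^sub>L op_inverse C \<in> effects \<longrightarrow>
         S (C o\<^sub>L A o\<^sub>L op_inverse C) = S A) \<and>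
     continuous_on effects S"

definition S1 :: "('a::chilbert_space \<Rightarrow>\<^sub>L 'a) \<Rightarrow> real" where
  "S1 A = (norm A + norm (id_blinfun - A) - 1)
          - (norm (A o\<^sub>L (id_blinfun - A)) + norm (id_blinfun - (A o\<^sub>L (id_blinfun - A))) - 1)"

end

theory Submission
  imports Defs
begin

definition herm :: "('a::chilbert_space \<Rightarrow>\<^sub>L 'a) \<Rightarrow> bool" where
  "herm X \<longleftrightarrow> (\<forall>x y. cinner (blinfun_apply X x) y = cinner x (blinfun_apply X y))"

definition rc :: "'a::chilbert_space \<Rightarrow> 'a \<Rightarrow> real" where
  "rc x y = Re (cinner x y)"

lemma rc_add_left: "rc (x + y) z = rc x z + rc y z"
  by (simp add: rc_def cinner_add_left)
lemma rc_scale_left: "rc (r *\<^sub>R x) y = r * rc x y"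
  by (simp add: rc_def scaleR_cscale cinner_cscale_left)
lemma rc_sym: "rc x y = rc y x"
  unfolding rc_def by (subst cinner_commute) simp
lemma rc_self: "rc x x = (norm x)^2"
  using cinner_real_nonneg[of x] by (simp add: norm_eq_sqrt_cinner rc_def)
lemma rc_add_right: "rc z (x + y) = rc z x + rc z y"
  by (metis rc_sym rc_add_left)
lemma rc_scale_right: "rc y (r *\<^sub>R x) = r * rc y x"
  by (metis rc_sym rc_scale_left)
lemma rc_minus_left: "rc (- x) y = - rc x y"
  using rc_scale_left[of "-1" x y] by simp
lemma rc_minus_right: "rc y (- x) = - rc y x"
  by (metis rc_sym rc_minus_left)
lemma rc_diff_left: "rc (x - y) z = rc x z - rc y z"
  by (metis diff_conv_add_uminus rc_add_left rc_minus_left)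
lemma rc_diff_right: "rc z (x - y) = rc z x - rc z y"
  by (metis rc_sym rc_diff_left)
lemma rc_zero_left[simp]: "rc 0 y = 0"
  using rc_scale_left[of 0 0 y] by simp
lemma rc_zero_right[simp]: "rc y 0 = 0"
  by (metis rc_sym rc_zero_left)

lemma bil_cs:
  fixes b :: "'a::real_vector \<Rightarrow> 'a \<Rightarrow> real"
  assumes add: "\<And>x y z. b (x+y) z = b x z + b y z"
    and scl: "\<And>r x y. b (r *\<^sub>R x) y = r * b x y"
    and sym: "\<And>x y. b x y = b y x"
    and pos: "\<And>x. b x x \<ge> 0"
  shows "(b x y)^2 \<le> b x x * b y y"
proof -
  have addr: "b z (x+y) = b z x + b z y" for x y z using add sym by metis
  have sclr: "b y (r *\<^sub>R x) = r * b y x" for r x y using scl sym by metis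
  have exp: "b (x + t *\<^sub>R y) (x + t *\<^sub>R y) = b x x + 2 * t * b x y + t^2 * b y y" for t
    by (simp add: add addr scl sclr sym[of y x] power2_eq_square algebra_simps)
  have q: "0 \<le> b x x + 2 * t * b x y + t^2 * b y y" for t
    using pos[of "x + t *\<^sub>R y"] exp by simp
  show ?thesis
  proof (cases "b y y = 0")
    case True
    have "b x y = 0"
    proof (rule ccontr)
      assume h: "b x y \<noteq> 0"
      have "0 \<le> b x x + 2 * (- (b x x + 1) / (2 * b x y)) * b x y"
        using q[of "- (b x x + 1) / (2 * b x y)"] True by simp
      also have "\<dots> = -1" using h by (simp add: field_simps)
      finally show False by simp
    qed
    then show ?thesis using True by simp
  next
    case False
    then have yy: "b y y > 0" using pos[of y] by simp
    have "0 \<le> b x x + 2 * (- b x y / b y y) * b x y + (- b x y / b y y)^2 * b y y"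
      using q by blast
    also have "\<dots> = b x x - (b x y)^2 / b y y"
      using yy by (simp add: field_simps power2_eq_square)
    finally show ?thesis using yy by (simp add: field_simps)
  qed
qed

lemma rc_cs: "\<bar>rc x y\<bar> \<le> norm x * norm y"
proof -
  have "(rc x y)^2 \<le> rc x x * rc y y"
    by (rule bil_cs, rule rc_add_left, rule rc_scale_left, rule rc_sym, simp add: rc_self)
  also have "\<dots> = (norm x * norm y)^2" by (simp add: rc_self power_mult_distrib)
  finally show ?thesis using power2_le_imp_le[of "\<bar>rc x y\<bar>" "norm x * norm y"] by simp
qed

definition Q :: "('a::chilbert_space \<Rightarrow>\<^sub>L 'a) \<Rightarrow> 'a \<Rightarrow> real" where
  "Q T x = rc x (blinfun_apply T x)"

lemma Q_le_norm: "Q T x \<le> norm T * (norm x)^2"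
proof -
  have "Q T x \<le> norm x * norm (blinfun_apply T x)" unfolding Q_def using rc_cs[of x "T x"] by linarith
  also have "\<dots> \<le> norm x * (norm T * norm x)" by (simp add: mult_left_mono norm_blinfun)
  finally show ?thesis by (simp add: power2_eq_square algebra_simps)
qed

lemma herm_rc: "herm T \<Longrightarrow> rc (blinfun_apply T x) y = rc x (blinfun_apply T y)"
  by (simp add: herm_def rc_def)

lemma pos_bound:
  assumes h: "herm T" and p: "\<And>x. 0 \<le> Q T x" and c: "\<And>x. Q T x \<le> c * (norm x)^2"
  and c0: "0 \<le> c"
  shows "(norm (blinfun_apply T x))^2 \<le> c * Q T x"
proof -
  define b where "b u v = rc u (blinfun_apply T v)" for u v
  have cs: "(b x (T x))^2 \<le> b x x * b (T x) (T x)"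
  proof (rule bil_cs)
    show "b (u + v) w = b u w + b v w" for u v w unfolding b_def by (rule rc_add_left)
    show "b (r *\<^sub>R u) w = r * b u w" for r u w unfolding b_def by (rule rc_scale_left)
    show "b u v = b v u" for u v unfolding b_def by (metis herm_rc[OF h] rc_sym)
    show "0 \<le> b u u" for u using p[of u] unfolding b_def Q_def .
  qed
  have e1: "b x (T x) = (norm (T x))^2"
    unfolding b_def using herm_rc[OF h, of x "T x"] rc_self by metis
  have e2: "b x x = Q T x" "b (T x) (T x) = Q T (T x)" by (auto simp: b_def Q_def)
  have le: "(norm (T x))^2 * (norm (T x))^2 \<le> (c * Q T x) * (norm (T x))^2"
  proof -
    have "(norm (T x))^2 * (norm (T x))^2 = (b x (T x))^2" by (simp add: e1 power2_eq_square)
    also have "\<dots> \<le> Q T x * Q T (T x)" using cs e2 by simp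
    also have "\<dots> \<le> Q T x * (c * (norm (T x))^2)" by (rule mult_left_mono[OF c p])
    finally show ?thesis by (simp add: algebra_simps)
  qed
  show ?thesis
  proof (cases "norm (T x) = 0")
    case True then show ?thesis using c0 p[of x] by simp
  next
    case False then have "(norm (T x))^2 > 0" by simp
    then show ?thesis using le mult_le_cancel_right_pos by blast
  qed
qed

lemma norm_le_from_Q:
  assumes h: "herm T" and p: "\<And>x. 0 \<le> Q T x" and c: "\<And>x. Q T x \<le> c * (norm x)^2"
  and c0: "0 \<le> c"
  shows "norm T \<le> c"
proof (rule norm_blinfun_bound[OF c0])
  fix x
  have "(norm (T x))^2 \<le> c * Q T x" by (rule pos_bound[OF h p c c0])
  also have "\<dots> \<le> c * (c * (norm x)^2)" by (rule mult_left_mono[OF c c0])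
  also have "\<dots> = (c * norm x)^2" by (simp add: power2_eq_square)
  finally show "norm (T x) \<le> c * norm x" using power2_le_imp_le c0 by simp
qed

lemma cinner_minus_left: "cinner (- x) z = - cinner x z"
proof -
  have "cinner (- x) z = cinner (cscale (complex_of_real (-1)) x) z"
    using scaleR_cscale[of "-1" x] by simp
  then show ?thesis by (simp add: cinner_cscale_left)
qed
lemma cinner_diff_left: "cinner (x - y) z = cinner x z - cinner y z"
  by (metis diff_conv_add_uminus cinner_add_left cinner_minus_left)
lemma cinner_diff_right: "cinner z (x - y) = cinner z x - cinner z y"
  by (metis cinner_commute cinner_diff_left complex_cnj_diff)
lemma cinner_add_right: "cinner z (x + y) = cinner z x + cinner z y"
  by (metis cinner_commute cinner_add_left complex_cnj_add)
lemma cinner_scaleR_left: "cinner (r *\<^sub>R x) z = complex_of_real r * cinner x z"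
  by (simp add: scaleR_cscale cinner_cscale_left)
lemma cinner_scaleR_right: "cinner z (r *\<^sub>R x) = complex_of_real r * cinner z x"
  by (metis cinner_commute cinner_scaleR_left complex_cnj_mult complex_cnj_complex_of_real)

lemma herm_diff: "herm S \<Longrightarrow> herm T \<Longrightarrow> herm (S - T)"
  by (simp add: herm_def blinfun.diff_left cinner_diff_left cinner_diff_right)
lemma herm_id: "herm id_blinfun"
  by (simp add: herm_def)
lemma herm_scale: "herm T \<Longrightarrow> herm (r *\<^sub>R T)"
  by (simp add: herm_def blinfun.scaleR_left cinner_scaleR_left cinner_scaleR_right)
lemma herm_sq: "herm T \<Longrightarrow> herm (T o\<^sub>L T)"
  by (simp add: herm_def)

lemma Q_diff: "Q (S - T) x = Q S x - Q T x"
  by (simp add: Q_def blinfun.diff_left rc_diff_right)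
lemma Q_id: "Q id_blinfun x = (norm x)^2"
  by (simp add: Q_def rc_self)
lemma Q_scale: "Q (r *\<^sub>R T) x = r * Q T x"
  by (simp add: Q_def blinfun.scaleR_left rc_scale_right)
lemma Q_sq: "herm T \<Longrightarrow> Q (T o\<^sub>L T) x = (norm (blinfun_apply T x))^2"
  by (simp add: Q_def herm_rc[symmetric] rc_self)

lemma cinner_zero_left: "cinner 0 z = 0"
  using cinner_add_left[of 0 0 z] by simp
lemma cinner_zero_right: "cinner z 0 = 0"
  by (metis cinner_commute cinner_zero_left complex_cnj_zero)

lemma effectD:
  assumes "A \<in> effects"
  shows "herm A" "0 \<le> Q A x" "Q A x \<le> (norm x)^2"
proof -
  show "herm A" using assms by (auto simp: effects_def selfadjoint_def herm_def)
  show "0 \<le> Q A x" using assms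
    by (auto simp: effects_def op_le_def Q_def rc_def cinner_zero_right)
  show "Q A x \<le> (norm x)^2" using assms
    by (auto simp: effects_def op_le_def Q_def rc_self[symmetric] rc_def)
qed

definition ff :: "real \<Rightarrow> real" where "ff t = t - t^2"
definition t0 :: "real \<Rightarrow> real \<Rightarrow> real" where "t0 m M = max m (min M (1/2))"

lemma ff_le_t0: assumes "m \<le> t" "t \<le> M" shows "ff t \<le> ff (t0 m M)"
proof -
  have "ff (t0 m M) - ff t = (t0 m M - t) * (1 - t0 m M - t)"
    by (simp add: ff_def power2_eq_square algebra_simps)
  also have "\<dots> \<ge> 0"
    using assms unfolding t0_def
    by (cases "t \<le> 1/2"; cases "M \<le> 1/2"; cases "m \<le> 1/2"; auto intro: mult_nonneg_nonneg mult_nonpos_nonpos)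
  finally show ?thesis by simp
qed

lemma R1:
  assumes n: "n > 0" and lo: "m * n \<le> a" and up: "a \<le> M * n" and s: "a^2 \<le> n * s"
  shows "a - s \<le> ff (t0 m M) * n"
proof -
  define t where "t = a / n"
  have a: "a = t * n" using n by (simp add: t_def)
  have tm: "m \<le> t" "t \<le> M" using lo up n by (auto simp: t_def field_simps)
  have "t^2 * n \<le> s" using s n a by (simp add: power2_eq_square algebra_simps)
  then have "a - s \<le> ff t * n" using a by (simp add: ff_def algebra_simps)
  also have "\<dots> \<le> ff (t0 m M) * n" using ff_le_t0[OF tm] n by simp
  finally show ?thesis .
qed

lemma R2:
  assumes n: "n > 0" and lo: "m * n \<le> a" and up: "a \<le> M * n" and s: "s \<le> (M + m) * a - m * M * n"
  shows "min (ff m) (ff M) * n \<le> a - s"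
proof -
  have "(1 - M - m) * a + m * M * n \<le> a - s" using s by (simp add: algebra_simps)
  moreover have "min (ff m) (ff M) * n \<le> (1 - M - m) * a + m * M * n"
  proof (cases "1 - M - m \<ge> 0")
    case True
    have "(1 - M - m) * (m * n) \<le> (1 - M - m) * a" by (rule mult_left_mono[OF lo True])
    then have "ff m * n \<le> (1 - M - m) * a + m * M * n" by (simp add: ff_def power2_eq_square algebra_simps)
    then show ?thesis by (smt (verit) min.cobounded1 mult_right_mono n)
  next
    case False
    have "(1 - M - m) * (M * n) \<le> (1 - M - m) * a" using up False by (simp add: mult_left_mono_neg)
    then have "ff M * n \<le> (1 - M - m) * a + m * M * n" by (simp add: ff_def power2_eq_square algebra_simps)
    then show ?thesis by (smt (verit) min.cobounded2 mult_right_mono n)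
  qed
  ultimately show ?thesis by linarith
qed

lemma G: fixes u v d :: real assumes "0 \<le> u" "u \<le> d" "v \<le> 1" shows "u * v \<le> d"
  and "0 < d \<Longrightarrow> u < d \<or> v < 1 \<Longrightarrow> u * v < d"
proof -
  have a: "u * v \<le> u" using assms mult_left_mono[of v 1 u] by simp
  then show "u * v \<le> d" using assms by simp
  assume d: "0 < d" and o: "u < d \<or> v < 1"
  show "u * v < d"
  proof (cases "u < d")
    case True then show ?thesis using a by simp
  next
    case False then have "u = d" using assms by simp
    then have "v < 1" using o by simp
    then have "u * v < u * 1" using d \<open>u = d\<close> by (intro mult_strict_left_mono) auto
    then show ?thesis using \<open>u = d\<close> by simp
  qed
qed

lemma R3:
  assumes "0 \<le> m" "m \<le> M" "M \<le> 1"
  shows "ff (t0 m M) - min (ff m) (ff M) \<le> M - m"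
    and "m < M \<Longrightarrow> ff (t0 m M) - min (ff m) (ff M) < M - m"
proof -
  define T where "T = t0 m M"
  have e1: "ff T - ff m = (T - m) * (1 - T - m)"
    and e2: "ff T - ff M = (M - T) * (T + M - 1)"
    by (simp_all add: ff_def power2_eq_square algebra_simps)
  have tb: "m \<le> T" "T \<le> M" using assms by (auto simp: t0_def T_def)
  have g1: "(T - m) * (1 - T - m) \<le> M - m" by (rule G(1)) (use assms tb in auto)
  have g2: "(M - T) * (T + M - 1) \<le> M - m" by (rule G(1)) (use assms tb in auto)
  show "ff (t0 m M) - min (ff m) (ff M) \<le> M - m" using g1 g2 e1 e2 unfolding T_def[symmetric] by linarith
  assume mM: "m < M"
  have h1: "(T - m) * (1 - T - m) < M - m"
  proof (rule G(2))
    show "T - m < M - m \<or> 1 - T - m < 1" using tb mM assms by (cases "T < M") auto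
  qed (use assms tb mM in auto)
  have h2: "(M - T) * (T + M - 1) < M - m"
  proof (rule G(2))
    show "M - T < M - m \<or> T + M - 1 < 1" using tb mM assms by (cases "m < T") auto
  qed (use assms tb mM in auto)
  show "ff (t0 m M) - min (ff m) (ff M) < M - m" using h1 h2 e1 e2 unfolding T_def[symmetric] by linarith
qed

lemma ff_t0_nonneg: "0 \<le> m \<Longrightarrow> m \<le> M \<Longrightarrow> M \<le> 1 \<Longrightarrow> 0 \<le> ff (t0 m M)"
  unfolding ff_def t0_def by (auto simp: power2_eq_square intro!: mult_right_le_one_le)
lemma ff_le_quarter: "ff t \<le> 1/4"
proof -
  have "0 \<le> (t - 1/2)^2" by simp
  then show ?thesis by (simp add: ff_def power2_eq_square algebra_simps)
qed

lemma nontriv_id: assumes "(x0::'a::chilbert_space) \<noteq> 0" shows "norm (id_blinfun :: 'a \<Rightarrow>\<^sub>L 'a) = 1"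
proof -
  have "norm x0 \<le> norm (id_blinfun :: 'a \<Rightarrow>\<^sub>L 'a) * norm x0"
    using norm_blinfun[of "id_blinfun :: 'a \<Rightarrow>\<^sub>L 'a" x0] by simp
  then have "1 \<le> norm (id_blinfun :: 'a \<Rightarrow>\<^sub>L 'a)" using assms by simp
  then show ?thesis using norm_blinfun_id_le by (metis order_antisym)
qed

lemma effect_analysis:
  fixes A :: "'a::chilbert_space \<Rightarrow>\<^sub>L 'a"
  assumes A: "A \<in> effects" and x0: "(x0::'a) \<noteq> 0"
  defines "M \<equiv> norm A" and "m \<equiv> 1 - norm (id_blinfun - A)" and "B \<equiv> A o\<^sub>L (id_blinfun - A)"
  shows "0 \<le> m" "m \<le> M" "M \<le> 1" "norm B \<le> ff (t0 m M)"
    "norm (id_blinfun - B) \<le> 1 - min (ff m) (ff M)" "1 \<le> norm B + norm (id_blinfun - B)"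
    "herm B" "\<And>x. Q B x = Q A x - (norm (blinfun_apply A x))^2"
    "\<And>x. m * (norm x)^2 \<le> Q A x" "\<And>x. Q A x \<le> M * (norm x)^2"
proof -
  note hA = effectD(1)[OF A] and pA = effectD(2)[OF A] and uA = effectD(3)[OF A]
  show up: "Q A x \<le> M * (norm x)^2" for x unfolding M_def by (rule Q_le_norm)
  show lo: "m * (norm x)^2 \<le> Q A x" for x
    using Q_le_norm[of "id_blinfun - A" x] unfolding m_def Q_diff Q_id by (simp add: algebra_simps)
  show M1: "M \<le> 1" unfolding M_def by (rule norm_le_from_Q[OF hA pA]) (use uA in auto)
  have "norm (id_blinfun - A) \<le> 1"
    by (rule norm_le_from_Q) (auto simp: herm_diff herm_id hA Q_diff Q_id pA uA)
  then show m0: "0 \<le> m" unfolding m_def by simp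
  have "m * (norm x0)^2 \<le> M * (norm x0)^2" using lo[of x0] up[of x0] by linarith
  then show mM: "m \<le> M" using x0 by (simp add: mult_le_cancel_right)
  have Beq: "B = A - (A o\<^sub>L A)" unfolding B_def by (rule blinfun_eqI) (simp add: blinfun.diff_right blinfun.diff_left)
  show hB: "herm B" unfolding Beq by (intro herm_diff herm_sq hA)
  show QB: "Q B x = Q A x - (norm (blinfun_apply A x))^2" for x unfolding Beq Q_diff Q_sq[OF hA] ..
  have s1: "(norm (A x))^2 \<le> Q A x" for x
    using pos_bound[OF hA pA, of 1] uA by simp
  have s2: "(Q A x)^2 \<le> (norm x)^2 * (norm (A x))^2" for x
  proof -
    have "\<bar>Q A x\<bar> \<le> norm x * norm (A x)" unfolding Q_def by (rule rc_cs)
    then show ?thesis by (metis abs_ge_zero power2_abs power_mono power_mult_distrib)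
  qed
  have s3: "(norm (A x))^2 \<le> (M + m) * Q A x - m * M * (norm x)^2" for x
  proof -
    define T where "T = A - m *\<^sub>R id_blinfun"
    have hT: "herm T" unfolding T_def by (intro herm_diff herm_scale herm_id hA)
    have QT: "Q T y = Q A y - m * (norm y)^2" for y unfolding T_def Q_diff Q_scale Q_id ..
    have "(norm (T x))^2 \<le> (M - m) * Q T x"
    proof (rule pos_bound[OF hT])
      show "0 \<le> Q T y" for y using QT[of y] lo[of y] by linarith
      show "Q T y \<le> (M - m) * (norm y)^2" for y using QT[of y] up[of y] by (simp add: algebra_simps)
      show "0 \<le> M - m" using mM by simp
    qed
    moreover have "(norm (T x))^2 = (norm (A x))^2 - 2 * m * Q A x + m^2 * (norm x)^2"
    proof -
      have "(norm (T x))^2 = rc (A x - m *\<^sub>R x) (A x - m *\<^sub>R x)"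
        by (simp add: T_def rc_self blinfun.diff_left blinfun.scaleR_left)
      also have "\<dots> = rc (A x) (A x) - m * rc x (A x) - m * rc (A x) x + m * (m * rc x x)"
        by (simp only: rc_diff_left rc_diff_right rc_scale_left rc_scale_right) (simp add: algebra_simps)
      also have "\<dots> = (norm (A x))^2 - 2 * m * Q A x + m^2 * (norm x)^2"
        by (simp add: rc_self Q_def rc_sym[of "A x" x] power2_eq_square)
      finally show ?thesis .
    qed
    ultimately show ?thesis unfolding QT by (simp add: power2_eq_square algebra_simps)
  qed
  have pB: "0 \<le> Q B x" for x using QB s1 by simp
  have QBup: "Q B x \<le> ff (t0 m M) * (norm x)^2" for x
  proof (cases "x = 0")
    case True then show ?thesis by (simp add: Q_def)
  next
    case False
    then show ?thesis unfolding QB by (intro R1) (use lo up s2 in auto)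
  qed
  have QBlo: "min (ff m) (ff M) * (norm x)^2 \<le> Q B x" for x
  proof (cases "x = 0")
    case True then show ?thesis by (simp add: Q_def)
  next
    case False
    then show ?thesis unfolding QB by (intro R2) (use lo up s3 in auto)
  qed
  show "norm B \<le> ff (t0 m M)"
    by (rule norm_le_from_Q[OF hB pB QBup]) (rule ff_t0_nonneg[OF m0 mM M1])
  show "norm (id_blinfun - B) \<le> 1 - min (ff m) (ff M)"
  proof (rule norm_le_from_Q)
    show "herm (id_blinfun - B)" by (intro herm_diff herm_id hB)
    show "0 \<le> Q (id_blinfun - B) x" for x 
    proof -
      have "Q B x \<le> (norm x)^2" using QB[of x] uA[of x] zero_le_power2[of "norm (A x)"] by linarith
      then show ?thesis by (simp add: Q_diff Q_id)
    qed
    show "Q (id_blinfun - B) x \<le> (1 - min (ff m) (ff M)) * (norm x)^2" for x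
      using QBlo[of x] by (simp add: Q_diff Q_id algebra_simps)
    show "0 \<le> 1 - min (ff m) (ff M)" using ff_le_quarter[of m] by linarith
  qed
  have "norm (id_blinfun :: 'a \<Rightarrow>\<^sub>L 'a) \<le> norm B + norm (id_blinfun - B)"
    by (metis add_diff_cancel_left' diff_add_cancel norm_triangle_ineq)
  then show "1 \<le> norm B + norm (id_blinfun - B)" using nontriv_id[OF x0] by simp
qed


lemma S1_cont: "continuous_on X (S1 :: ('a::chilbert_space \<Rightarrow>\<^sub>L 'a) \<Rightarrow> real)"
  unfolding S1_def[abs_def] by (intro continuous_intros)

lemma sq_norm: assumes h: "herm X" shows "norm (X o\<^sub>L X) = (norm X)^2"
proof (rule order_antisym)
  show "norm (X o\<^sub>L X) \<le> (norm X)^2" using norm_blinfun_compose[of X X] by (simp add: power2_eq_square)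
  have "norm X \<le> sqrt (norm (X o\<^sub>L X))"
  proof (rule norm_blinfun_bound)
    fix x
    have "(norm (X x))^2 = Q (X o\<^sub>L X) x" by (rule Q_sq[OF h, symmetric])
    also have "\<dots> \<le> norm (X o\<^sub>L X) * (norm x)^2" by (rule Q_le_norm)
    also have "\<dots> = (sqrt (norm (X o\<^sub>L X)) * norm x)^2" by (simp add: power_mult_distrib)
    finally show "norm (X x) \<le> sqrt (norm (X o\<^sub>L X)) * norm x"
      by (rule power2_le_imp_le) simp
  qed simp
  then show "(norm X)^2 \<le> norm (X o\<^sub>L X)"
    by (metis norm_ge_zero power_mono real_sqrt_pow2)
qed

primrec itsq :: "nat \<Rightarrow> ('a::chilbert_space \<Rightarrow>\<^sub>L 'a) \<Rightarrow> ('a \<Rightarrow>\<^sub>L 'a)" where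
  "itsq 0 X = X"
| "itsq (Suc k) X = itsq k X o\<^sub>L itsq k X"

lemma itsq_herm_norm: "herm X \<Longrightarrow> herm (itsq k X) \<and> norm (itsq k X) = (norm X)^(2^k)"
proof (induction k)
  case 0 then show ?case by simp
next
  case (Suc k)
  then show ?case by (simp add: herm_sq sq_norm power_mult[symmetric] mult.commute)
qed

lemma itsq_conj:
  assumes DC: "D o\<^sub>L C = id_blinfun"
  shows "itsq k (C o\<^sub>L X o\<^sub>L D) = C o\<^sub>L itsq k X o\<^sub>L D"
proof (induction k)
  case 0 then show ?case by simp
next
  case (Suc k)
  have dc: "D (C y) = y" for y using arg_cong[OF DC, of "\<lambda>F. blinfun_apply F y"] by simp
  show ?case by (simp add: Suc) (rule blinfun_eqI, simp add: dc)
qed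

lemma pow_limit:
  fixes a b K :: real
  assumes a: "0 \<le> a" and b: "0 \<le> b" and h: "\<And>k. a^(2^k) \<le> K * b^(2^k)"
  shows "a \<le> b"
proof (rule ccontr)
  assume "\<not> a \<le> b"
  then have ab: "b < a" by simp
  then have a0: "0 < a" using b by simp
  define r where "r = b / a"
  have r0: "0 \<le> r" and r1: "r < 1" using a0 ab b by (auto simp: r_def)
  have k1: "1 \<le> K * r^k" for k
  proof -
    have "a^(2^k) \<le> K * b^(2^k)" by (rule h)
    then have "1 \<le> K * r^(2^k)" using a0 by (simp add: r_def power_divide field_simps)
    moreover have "r^(2^k) \<le> r^k"
      by (rule power_decreasing) (use r0 r1 in \<open>auto intro: less_imp_le_nat[OF less_exp]\<close>)
    moreover have "0 \<le> K"
    proof (rule ccontr)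
      assume "\<not> 0 \<le> K"
      then have "K * b \<le> 0" using b by (simp add: mult_nonpos_nonneg)
      then show False using h[of 0] a0 by simp
    qed
    ultimately show ?thesis by (smt (verit) mult_left_mono)
  qed
  have "(\<lambda>k. K * r^k) \<longlonglongrightarrow> K * 0"
    by (intro tendsto_mult tendsto_const LIMSEQ_realpow_zero r0 r1)
  then have "eventually (\<lambda>k. K * r^k < 1) sequentially" by (intro order_tendstoD(2)) auto
  then obtain k where "K * r^k < 1" by (meson eventually_sequentially order_refl)
  then show False using k1[of k] by simp
qed

lemma sim_norm_le:
  assumes hX: "herm X" and hY: "herm Y" and Y: "Y = C o\<^sub>L X o\<^sub>L D" and DC: "D o\<^sub>L C = id_blinfun"
  shows "norm Y \<le> norm X"
proof (rule pow_limit[where K = "norm C * norm D"])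
  fix k
  have "(norm Y)^(2^k) = norm (itsq k Y)" using itsq_herm_norm[OF hY] by simp
  also have "\<dots> = norm (C o\<^sub>L itsq k X o\<^sub>L D)" unfolding Y itsq_conj[OF DC] ..
  also have "\<dots> \<le> norm C * norm (itsq k X) * norm D"
    by (meson norm_blinfun_compose order_trans mult_right_mono norm_ge_zero)
  also have "\<dots> = norm C * norm D * (norm X)^(2^k)" using itsq_herm_norm[OF hX] by simp
  finally show "(norm Y)^(2^k) \<le> norm C * norm D * (norm X)^(2^k)" .
qed simp_all

lemma sim_norm_eq:
  assumes hX: "herm X" and hY: "herm Y" and Y: "Y = C o\<^sub>L X o\<^sub>L D"
    and CD: "C o\<^sub>L D = id_blinfun" and DC: "D o\<^sub>L C = id_blinfun"
  shows "norm Y = norm X"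
proof -
  have cd: "C (D y) = y" for y using arg_cong[OF CD, of "\<lambda>F. blinfun_apply F y"] by simp
  have dc: "D (C y) = y" for y using arg_cong[OF DC, of "\<lambda>F. blinfun_apply F y"] by simp
  have X: "X = D o\<^sub>L Y o\<^sub>L C" unfolding Y by (rule blinfun_eqI) (simp add: dc)
  show ?thesis using sim_norm_le[OF hX hY Y DC] sim_norm_le[OF hY hX X CD] by simp
qed


lemma S1_triv: assumes "0 \<le> l" "l \<le> 1" shows "S1 (l *\<^sub>R (id_blinfun :: 'a::chilbert_space \<Rightarrow>\<^sub>L 'a)) = 0"
proof -
  define e where "e = norm (id_blinfun :: 'a \<Rightarrow>\<^sub>L 'a)"
  have a: "id_blinfun - l *\<^sub>R (id_blinfun :: 'a \<Rightarrow>\<^sub>L 'a) = (1 - l) *\<^sub>R id_blinfun"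
    by (rule blinfun_eqI) (simp add: blinfun.diff_left blinfun.scaleR_left algebra_simps)
  have b: "(l *\<^sub>R (id_blinfun :: 'a \<Rightarrow>\<^sub>L 'a)) o\<^sub>L ((1 - l) *\<^sub>R id_blinfun) = (l * (1 - l)) *\<^sub>R id_blinfun"
    by (rule blinfun_eqI) (simp add: blinfun.scaleR_left)
  have c: "id_blinfun - (l * (1 - l)) *\<^sub>R (id_blinfun :: 'a \<Rightarrow>\<^sub>L 'a) = (1 - l * (1 - l)) *\<^sub>R id_blinfun"
    by (rule blinfun_eqI) (simp add: blinfun.diff_left blinfun.scaleR_left algebra_simps)
  have p: "0 \<le> l * (1 - l)" "0 \<le> 1 - l * (1 - l)" using assms
    by (auto intro: mult_nonneg_nonneg) (smt (verit) mult_left_le_one_le)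
  have "S1 (l *\<^sub>R (id_blinfun :: 'a \<Rightarrow>\<^sub>L 'a)) = (norm (l *\<^sub>R (id_blinfun :: 'a \<Rightarrow>\<^sub>L 'a)) + norm ((1 - l) *\<^sub>R (id_blinfun :: 'a \<Rightarrow>\<^sub>L 'a)) - 1)
     - (norm ((l * (1 - l)) *\<^sub>R (id_blinfun :: 'a \<Rightarrow>\<^sub>L 'a)) + norm ((1 - l * (1 - l)) *\<^sub>R (id_blinfun :: 'a \<Rightarrow>\<^sub>L 'a)) - 1)"
    unfolding S1_def a b c ..
  also have "\<dots> = (l * e + (1 - l) * e - 1) - ((l * (1 - l)) * e + (1 - l * (1 - l)) * e - 1)"
    unfolding norm_scaleR e_def using assms p by simp
  also have "\<dots> = 0" by (simp add: algebra_simps)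
  finally show ?thesis .
qed

lemma idem_norm:
  assumes "P o\<^sub>L P = P" "P \<noteq> 0" "norm P \<le> 1" shows "norm P = 1"
proof -
  have "norm P \<le> norm P * norm P" using norm_blinfun_compose[of P P] assms(1) by simp
  moreover have "norm P > 0" using assms(2) by simp
  ultimately show ?thesis using assms(3) by (smt (verit) mult_le_cancel_left1)
qed

theorem mainTheorem10:
  assumes "separable_hilbert TYPE('a::chilbert_space)"
  shows "sharpness_measure (S1 :: ('a \<Rightarrow>\<^sub>L 'a) \<Rightarrow> real)"
proof -
  have S123: "(0 \<le> S1 A \<and> S1 A \<le> 1) \<and> (S1 A = 0 \<longleftrightarrow> trivial_effect A) \<and>
      (S1 A = 1 \<longleftrightarrow> nontrivial_projection A)" if A: "A \<in> (effects :: ('a \<Rightarrow>\<^sub>L 'a) set)" for A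
  proof (cases "\<exists>x0::'a. x0 \<noteq> 0")
    case False
    then have z: "T = 0" for T :: "'a \<Rightarrow>\<^sub>L 'a" by (intro blinfun_eqI) (metis blinfun.zero_right blinfun.zero_left)
    have S0: "S1 T = 0" for T :: "'a \<Rightarrow>\<^sub>L 'a" unfolding S1_def by (subst (1 2 3 4) z) simp
    have "trivial_effect A" unfolding trivial_effect_def by (rule exI[of _ 0]) (simp add: z[of A])
    moreover have "\<not> nontrivial_projection A" unfolding nontrivial_projection_def using z[of A] by simp
    ultimately show ?thesis using S0[of A] by simp
  next
    case True
    then obtain x0 :: 'a where x0: "x0 \<noteq> 0" by blast
    define M where "M = norm A"
    define m where "m = 1 - norm (id_blinfun - A)"
    define B where "B = A o\<^sub>L (id_blinfun - A)"
    note EA = effect_analysis[OF A x0, folded M_def m_def B_def]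
    have hA: "herm A" by (rule effectD(1)[OF A])
    have Seq: "S1 A = (M - m) - (norm B + norm (id_blinfun - B) - 1)"
      unfolding S1_def M_def m_def B_def by simp
    have R: "ff (t0 m M) - min (ff m) (ff M) \<le> M - m" by (rule R3(1)[OF EA(1-3)])
    have pos: "0 \<le> S1 A" using Seq R EA(4,5) by linarith
    have le1: "S1 A \<le> 1" using Seq EA(1-3,6) by linarith
    have Bx: "B x = A x - A (A x)" for x unfolding B_def by (simp add: blinfun.diff_left blinfun.diff_right)
    have S2: "S1 A = 0 \<longleftrightarrow> trivial_effect A"
    proof
      assume S0: "S1 A = 0"
      have "\<not> m < M" using R3(2)[OF EA(1-3)] Seq EA(4,5) S0 by fastforce
      then have mM: "m = M" using EA(2) by simp
      define T where "T = A - m *\<^sub>R id_blinfun"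
      have QT: "Q T y = Q A y - m * (norm y)^2" for y unfolding T_def Q_diff Q_scale Q_id ..
      have "norm T \<le> 0"
      proof (rule norm_le_from_Q)
        show "herm T" unfolding T_def by (intro herm_diff herm_scale herm_id hA)
        show "0 \<le> Q T y" for y using QT[of y] EA(9)[of y] by linarith
        show "Q T y \<le> 0 * (norm y)^2" for y using QT[of y] EA(10)[of y] mM by simp
      qed simp
      then have "T = 0" by simp
      then have "A = m *\<^sub>R id_blinfun" unfolding T_def by simp
      then show "trivial_effect A" unfolding trivial_effect_def using EA(1-3) mM by auto
    next
      assume "trivial_effect A"
      then obtain l where "0 \<le> l" "l \<le> 1" "A = l *\<^sub>R id_blinfun" unfolding trivial_effect_def by blast
      then show "S1 A = 0" using S1_triv by simp
    qed
    have S3: "S1 A = 1 \<longleftrightarrow> nontrivial_projection A"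
    proof
      assume S1eq: "S1 A = 1"
      have M1: "M = 1" and m0: "m = 0" and pr: "norm B + norm (id_blinfun - B) = 1"
        using Seq S1eq EA(1-3,6) by linarith+
      define p where "p = norm B"
      have QBge: "p * (norm x)^2 \<le> Q B x" for x
      proof -
        have "Q (id_blinfun - B) x \<le> norm (id_blinfun - B) * (norm x)^2" by (rule Q_le_norm)
        moreover have "norm (id_blinfun - B) = 1 - p" using pr unfolding p_def by simp
        ultimately have "(norm x)^2 - Q B x \<le> (1 - p) * (norm x)^2" unfolding Q_diff Q_id by simp
        then show ?thesis by (simp add: algebra_simps)
      qed
      have "norm (id_blinfun - A) \<le> 1 - p"
      proof (rule norm_le_from_Q)
        show "herm (id_blinfun - A)" by (intro herm_diff herm_id hA)
        show "0 \<le> Q (id_blinfun - A) x" for x using effectD(3)[OF A, of x] by (simp add: Q_diff Q_id)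
        show "Q (id_blinfun - A) x \<le> (1 - p) * (norm x)^2" for x
        proof -
          have "p * (norm x)^2 \<le> Q A x" using QBge[of x] EA(8)[of x] zero_le_power2[of "norm (A x)"] by linarith
          then show ?thesis by (simp add: Q_diff Q_id algebra_simps)
        qed
        show "0 \<le> 1 - p" using EA(4) ff_le_quarter[of "t0 m M"] unfolding p_def by linarith
      qed
      then have "p \<le> 0" using m0 unfolding m_def by simp
      then have "B = 0" unfolding p_def by simp
      then have AA: "A o\<^sub>L A = A" by (intro blinfun_eqI) (metis Bx blinfun.zero_left eq_iff_diff_eq_0 blinfun_apply_blinfun_compose)
      have "A \<noteq> 0" using M1 unfolding M_def by auto
      moreover have "A \<noteq> id_blinfun" using m0 unfolding m_def by auto
      moreover have "selfadjoint A" using A by (simp add: effects_def)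
      ultimately show "nontrivial_projection A" using AA
        by (simp add: nontrivial_projection_def projection_def)
    next
      assume NP: "nontrivial_projection A"
      then have AA: "A o\<^sub>L A = A" and A0: "A \<noteq> 0" and AI: "A \<noteq> id_blinfun"
        by (auto simp: nontrivial_projection_def projection_def)
      have AAx: "A (A x) = A x" for x using arg_cong[OF AA, of "\<lambda>F. blinfun_apply F x"] by simp
      have "B = 0" by (rule blinfun_eqI) (simp add: Bx AAx)
      have nA: "norm A = 1" by (rule idem_norm[OF AA A0]) (use EA(3) M_def in simp)
      have II: "(id_blinfun - A) o\<^sub>L (id_blinfun - A) = id_blinfun - A"
        by (rule blinfun_eqI) (simp add: blinfun.diff_left blinfun.diff_right AAx)
      have nI: "norm (id_blinfun - A) = 1"
        by (rule idem_norm[OF II]) (use AI EA(1) m_def in auto)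
      show "S1 A = 1" using Seq \<open>B = 0\<close> nA nI nontriv_id[OF x0] unfolding M_def m_def by simp
    qed
    show ?thesis using pos le1 S2 S3 by blast
  qed
  have S4: "S1 (id_blinfun - A) = S1 A" for A :: "'a \<Rightarrow>\<^sub>L 'a"
  proof -
    have e1: "id_blinfun - (id_blinfun - A) = A" by simp
    have e2: "(id_blinfun - A) o\<^sub>L A = A o\<^sub>L (id_blinfun - A)"
      by (rule blinfun_eqI) (simp add: blinfun.diff_left blinfun.diff_right)
    show ?thesis unfolding S1_def e1 e2 by simp
  qed
  have S5: "S1 (C o\<^sub>L A o\<^sub>L op_inverse C) = S1 A"
    if A: "A \<in> effects" and C: "invertible_op C" and E: "C o\<^sub>L A o\<^sub>L op_inverse C \<in> effects"
    for A C :: "'a \<Rightarrow>\<^sub>L 'a"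
  proof -
    obtain D where bD: "bounded_op D" and CD: "C o\<^sub>L D = id_blinfun" and DC: "D o\<^sub>L C = id_blinfun"
      using C unfolding invertible_op_def by blast
    have cd: "C (D y) = y" for y using arg_cong[OF CD, of "\<lambda>F. blinfun_apply F y"] by simp
    have dc: "D (C y) = y" for y using arg_cong[OF DC, of "\<lambda>F. blinfun_apply F y"] by simp
    have inv: "op_inverse C = D" unfolding op_inverse_def
    proof (rule the_equality)
      show "bounded_op D \<and> C o\<^sub>L D = id_blinfun \<and> D o\<^sub>L C = id_blinfun" using bD CD DC by simp
      fix D' assume "bounded_op D' \<and> C o\<^sub>L D' = id_blinfun \<and> D' o\<^sub>L C = id_blinfun"
      then have "D' (C y) = y" for y by (metis blinfun_apply_blinfun_compose blinfun_apply_id_blinfun)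
      then show "D' = D" by (intro blinfun_eqI) (metis cd)
    qed
    define A2 where "A2 = C o\<^sub>L A o\<^sub>L D"
    have E2: "A2 \<in> effects" using E unfolding inv A2_def .
    have h1: "herm A" and h2: "herm A2" using effectD(1) A E2 by auto
    have hB: "herm (X o\<^sub>L (id_blinfun - X))" if "herm X" for X :: "'a \<Rightarrow>\<^sub>L 'a"
    proof -
      have "X o\<^sub>L (id_blinfun - X) = X - (X o\<^sub>L X)"
        by (rule blinfun_eqI) (simp add: blinfun.diff_right blinfun.diff_left)
      then show ?thesis using that by (simp add: herm_diff herm_sq)
    qed
    have n1: "norm A2 = norm A" by (rule sim_norm_eq[OF h1 h2 A2_def CD DC])
    have n2: "norm (id_blinfun - A2) = norm (id_blinfun - A)"
      by (rule sim_norm_eq[OF _ _ _ CD DC]) (auto intro!: herm_diff herm_id h1 h2 h2[unfolded A2_def] blinfun_eqI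
          simp: A2_def blinfun.diff_left blinfun.diff_right cd)
    have n3: "norm (A2 o\<^sub>L (id_blinfun - A2)) = norm (A o\<^sub>L (id_blinfun - A))"
      by (rule sim_norm_eq[OF _ _ _ CD DC]) (auto intro!: hB h1 h2 h2[unfolded A2_def] blinfun_eqI
          simp: A2_def blinfun.diff_left blinfun.diff_right cd dc)
    have n4: "norm (id_blinfun - (A2 o\<^sub>L (id_blinfun - A2))) = norm (id_blinfun - (A o\<^sub>L (id_blinfun - A)))"
      by (rule sim_norm_eq[OF _ _ _ CD DC]) (auto intro!: herm_diff herm_id hB h1 h2 h2[unfolded A2_def] blinfun_eqI
          simp: A2_def blinfun.diff_left blinfun.diff_right cd dc)
    show ?thesis unfolding inv A2_def[symmetric] S1_def n1 n2 n3 n4 ..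
  qed
  show ?thesis unfolding sharpness_measure_def
    using S123 S4 S5 S1_cont by blast
qed

end
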